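(* Let $X$ be a real Hilbert space, let $L > 0$, and let $f\colon X \to \mathbb{R}$ be a Fréchet differentiable function whose gradient $\nabla f\colon X \to X$ satisfies, for every $n\ge 1$, all $x_1,\ldots,x_n \in X$ and all $\lambda_1,\ldots,\lambda_n \ge 0$ with $\sum_{i=1}^n \lambda_i = 1$, $$\Big\| \nabla f\Big(\sum_{i=1}^n \lambda_i x_i\Big) - \sum_{i=1}^n \lambda_i \nabla f(x_i)\Big\| \le \frac{L}{2}\sum_{1\le i<j\le n} \lambda_i\lambda_j \|x_i - x_j\|^2.$$ Then $f$ is twice (Fréchet) differentiable and its Hessian is $L$-Lipschitz continuous (with respect to the operator norm on bounded linear operators $X\to X$).
   Context: $\nabla f(x)\in X$ is the Riesz representative of the Fréchet derivative of $f$ at $x$. The Hessian is the Fréchet derivative of $\nabla f$, a map $X \to \mathcal{B}(X,X)$. *)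

theory Defs
  imports "HOL-Analysis.Analysis"
begin

end

theory Submission
  imports Defs
begin

lemma hh: "(1/2::real) *\<^sub>R v + (1/2) *\<^sub>R v = (v::'a::real_vector)"
proof -
  have "(1/2::real) *\<^sub>R v + (1/2) *\<^sub>R v = (1/2 + 1/2::real) *\<^sub>R v" by (rule scaleR_add_left[symmetric])
  then show ?thesis by simp
qed

lemma dbl: "t *\<^sub>R v + t *\<^sub>R v = (t * 2) *\<^sub>R (v::'a::real_vector)"
  by (metis mult_2_right scaleR_left_distrib)

lemma half_sum: "a + b = 2 *\<^sub>R p \<Longrightarrow> (1/2::real) *\<^sub>R a + (1/2) *\<^sub>R b = (p::'a::real_vector)"
  by (metis scaleR_right_distrib scaleR_scaleR divide_self_if zero_neq_numeral times_divide_eq_left mult_1 scaleR_one)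

lemma tri3: "norm (a + b + c) \<le> norm a + norm b + norm (c::'a::real_normed_vector)"
  using norm_triangle_ineq[of "a+b" c] norm_triangle_ineq[of a b] by linarith

lemma parallelogram: "(norm (a + b))\<^sup>2 + (norm (a - b))\<^sup>2 = 2 * ((norm a)\<^sup>2 + (norm (b::'a::real_inner))\<^sup>2)"
  by (simp add: power2_norm_eq_inner inner_add_left inner_add_right inner_diff_left inner_diff_right inner_commute)

lemma tri4: "norm (- a + b + c - d) \<le> norm a + norm b + norm c + norm (d::'a::real_normed_vector)"
  using norm_triangle_ineq4[of "- a + b + c" d] tri3[of "-a" b c] by simp

locale semi =
  fixes g :: "'a::{real_inner, complete_space} \<Rightarrow> 'a" and L :: real
  assumes Lpos: "L > 0"
  and two: "\<And>a b l. 0 \<le> l \<Longrightarrow> l \<le> 1 \<Longrightarrow>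
     norm (g (l *\<^sub>R a + (1 - l) *\<^sub>R b) - (l *\<^sub>R g a + (1 - l) *\<^sub>R g b))
       \<le> L/2 * (l * (1-l) * (norm (a-b))\<^sup>2)"
begin

definition Q :: "'a \<Rightarrow> 'a \<Rightarrow> real \<Rightarrow> 'a" where
  "Q x h t = (1/t) *\<^sub>R (g (x + t *\<^sub>R h) - g x)"

lemma Qdiff:
  assumes s: "0 < s" and st: "s \<le> t"
  shows "norm (Q x h s - Q x h t) \<le> L/2 * (t-s) * (norm h)\<^sup>2"
proof -
  define l where "l = s/t"
  have t: "t > 0" using s st by linarith
  have l0: "0 \<le> l" "l \<le> 1" using s st t by (auto simp: l_def)
  have pt: "l *\<^sub>R (x + t *\<^sub>R h) + (1 - l) *\<^sub>R x = x + s *\<^sub>R h"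
    using t by (simp add: l_def algebra_simps)
  have eq: "Q x h s - Q x h t = (1/s) *\<^sub>R (g (x + s *\<^sub>R h) - (l *\<^sub>R g (x + t *\<^sub>R h) + (1 - l) *\<^sub>R g x))"
    using s t by (simp add: Q_def l_def algebra_simps)
  have "norm (Q x h s - Q x h t) = (1/s) * norm (g (x + s *\<^sub>R h) - (l *\<^sub>R g (x + t *\<^sub>R h) + (1 - l) *\<^sub>R g x))"
    using s by (simp add: eq)
  also have "\<dots> \<le> (1/s) * (L/2 * (l * (1-l) * (norm ((x + t *\<^sub>R h) - x))\<^sup>2))"
    using two[OF l0, of "x + t *\<^sub>R h" x] s by (intro mult_left_mono) (simp_all add: pt)
  also have "\<dots> = L/2 * (t-s) * (norm h)\<^sup>2"
    using s t by (simp add: l_def power2_eq_square field_simps)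
  finally show ?thesis .
qed

lemma Qdiff_abs:
  assumes "0 < s" "0 < t"
  shows "norm (Q x h s - Q x h t) \<le> L/2 * \<bar>t-s\<bar> * (norm h)\<^sup>2"
proof (cases "s \<le> t")
  case True
  then show ?thesis using Qdiff[OF assms(1) True] by simp
next
  case False
  then have "norm (Q x h t - Q x h s) \<le> L/2 * (s-t) * (norm h)\<^sup>2"
    using Qdiff[OF assms(2)] by simp
  then show ?thesis using False by (simp add: norm_minus_commute)
qed

lemma Qcauchy: "Cauchy (\<lambda>n. Q x h (1 / real (Suc n)))"
proof (rule CauchyI)
  fix e :: real assume e: "0 < e"
  define C where "C = L/2 * (norm h)\<^sup>2 + 1"
  have C: "C > 0" using Lpos by (simp add: C_def add_nonneg_pos)
  obtain M where M: "inverse (real (Suc M)) < e / C"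
    using reals_Archimedean[of "e/C"] e C by auto
  show "\<exists>M. \<forall>m\<ge>M. \<forall>n\<ge>M. norm (Q x h (1 / real (Suc m)) - Q x h (1 / real (Suc n))) < e"
  proof (intro exI allI impI)
    fix m n assume m: "M \<le> m" and n: "M \<le> n"
    have am: "0 < 1 / real (Suc m)" "1 / real (Suc m) \<le> 1 / real (Suc M)"
      using m by (auto simp: frac_le)
    have an: "0 < 1 / real (Suc n)" "1 / real (Suc n) \<le> 1 / real (Suc M)"
      using n by (auto simp: frac_le)
    have ab: "\<bar>1 / real (Suc n) - 1 / real (Suc m)\<bar> \<le> 1 / real (Suc M)"
      using am an by linarith
    have "norm (Q x h (1 / real (Suc m)) - Q x h (1 / real (Suc n)))
        \<le> L/2 * \<bar>1 / real (Suc n) - 1 / real (Suc m)\<bar> * (norm h)\<^sup>2"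
      by (rule Qdiff_abs[OF am(1) an(1)])
    also have "\<dots> = (L/2 * (norm h)\<^sup>2) * \<bar>1 / real (Suc n) - 1 / real (Suc m)\<bar>" by simp
    also have "\<dots> \<le> C * (1 / real (Suc M))"
      using ab Lpos by (intro mult_mono) (auto simp: C_def)
    also have "\<dots> < C * (e / C)"
      using M C by (intro mult_strict_left_mono) (auto simp: inverse_eq_divide)
    also have "\<dots> = e" using C by simp
    finally show "norm (Q x h (1 / real (Suc m)) - Q x h (1 / real (Suc n))) < e" .
  qed
qed

definition D :: "'a \<Rightarrow> 'a \<Rightarrow> 'a" where
  "D x h = lim (\<lambda>n. Q x h (1 / real (Suc n)))"

lemma Dlim: "(\<lambda>n. Q x h (1 / real (Suc n))) \<longlonglongrightarrow> D x h"
  unfolding D_def using Qcauchy Cauchy_convergent_iff convergent_LIMSEQ_iff by blast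

lemma QD:
  assumes t: "0 < t"
  shows "norm (Q x h t - D x h) \<le> L/2 * t * (norm h)\<^sup>2"
proof (rule tendsto_upperbound)
  show "((\<lambda>n. norm (Q x h t - Q x h (1 / real (Suc n)))) \<longlongrightarrow> norm (Q x h t - D x h)) sequentially"
    by (intro tendsto_intros Dlim)
  obtain M where M: "inverse (real (Suc M)) < t"
    using reals_Archimedean[of t] t by auto
  show "\<forall>\<^sub>F n in sequentially. norm (Q x h t - Q x h (1 / real (Suc n))) \<le> L/2 * t * (norm h)\<^sup>2"
  proof (rule eventually_sequentiallyI[of M])
    fix n assume n: "M \<le> n"
    have an: "0 < 1 / real (Suc n)" "1 / real (Suc n) \<le> 1 / real (Suc M)"
      using n by (auto simp: frac_le)
    then have an2: "1 / real (Suc n) \<le> t" using M by (simp add: inverse_eq_divide)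
    have "norm (Q x h t - Q x h (1 / real (Suc n))) = norm (Q x h (1 / real (Suc n)) - Q x h t)"
      by (simp add: norm_minus_commute)
    also have "\<dots> \<le> L/2 * (t - 1 / real (Suc n)) * (norm h)\<^sup>2"
      by (rule Qdiff[OF an(1) an2])
    also have "\<dots> \<le> L/2 * t * (norm h)\<^sup>2"
      using Lpos an by (intro mult_right_mono mult_left_mono) auto
    finally show "norm (Q x h t - Q x h (1 / real (Suc n))) \<le> L/2 * t * (norm h)\<^sup>2" .
  qed
qed simp

lemma E:
  assumes t: "0 \<le> t"
  shows "norm (g (x + t *\<^sub>R h) - g x - t *\<^sub>R D x h) \<le> L/2 * t\<^sup>2 * (norm h)\<^sup>2"
proof (cases "t = 0")
  case True then show ?thesis by simp
next
  case False
  then have tp: "t > 0" using t by simp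
  have "g (x + t *\<^sub>R h) - g x - t *\<^sub>R D x h = t *\<^sub>R (Q x h t - D x h)"
    using tp by (simp add: Q_def algebra_simps)
  then have "norm (g (x + t *\<^sub>R h) - g x - t *\<^sub>R D x h) = t * norm (Q x h t - D x h)"
    using tp by simp
  also have "\<dots> \<le> t * (L/2 * t * (norm h)\<^sup>2)"
    using QD[OF tp] tp by (intro mult_left_mono) auto
  also have "\<dots> = L/2 * t\<^sup>2 * (norm h)\<^sup>2" by (simp add: power2_eq_square)
  finally show ?thesis .
qed

lemma E1: "norm (g (x + h) - g x - D x h) \<le> L/2 * (norm h)\<^sup>2"
  using E[of 1 x h] by simp

lemma U:
  assumes K: "\<And>t. 0 < t \<Longrightarrow> t \<le> 1 \<Longrightarrow> norm (g (x + t *\<^sub>R h) - g x - t *\<^sub>R v) \<le> K * t\<^sup>2"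
  shows "v = D x h"
proof (rule ccontr)
  assume ne: "v \<noteq> D x h"
  define c where "c = norm (v - D x h)"
  have c: "c > 0" using ne by (simp add: c_def)
  define C where "C = K + L/2 * (norm h)\<^sup>2"
  have bnd: "c \<le> C * t" if t: "0 < t" "t \<le> 1" for t
  proof -
    have eqv: "t *\<^sub>R (v - D x h) = (g (x + t *\<^sub>R h) - g x - t *\<^sub>R D x h) - (g (x + t *\<^sub>R h) - g x - t *\<^sub>R v)"
      by (simp add: algebra_simps)
    have "t * c = norm (t *\<^sub>R (v - D x h))" using t by (simp add: c_def)
    also have "\<dots> = norm ((g (x + t *\<^sub>R h) - g x - t *\<^sub>R D x h) - (g (x + t *\<^sub>R h) - g x - t *\<^sub>R v))"
      by (simp only: eqv)
    also have "\<dots> \<le> norm (g (x + t *\<^sub>R h) - g x - t *\<^sub>R D x h) + norm (g (x + t *\<^sub>R h) - g x - t *\<^sub>R v)"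
      by (rule norm_triangle_ineq4)
    also have "\<dots> \<le> L/2 * t\<^sup>2 * (norm h)\<^sup>2 + K * t\<^sup>2"
      using E[of t x h] K[OF t] t by linarith
    also have "\<dots> = t * (C * t)" by (simp add: C_def power2_eq_square algebra_simps)
    finally show ?thesis using t by simp
  qed
  have C1: "c \<le> C" using bnd[of 1] by simp
  then have Cp: "C > 0" using c by linarith
  define t where "t = c / (2 * C)"
  have t: "0 < t" "t \<le> 1" using c Cp C1 by (auto simp: t_def field_simps)
  have "c \<le> C * t" by (rule bnd[OF t])
  also have "\<dots> = c / 2" using Cp by (simp add: t_def)
  finally show False using c by simp
qed

lemma D_scale_pos:
  assumes c: "c > 0"
  shows "D x (c *\<^sub>R h) = c *\<^sub>R D x h"
proof (rule sym, rule U[where K = "L/2 * c\<^sup>2 * (norm h)\<^sup>2"])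
  fix t :: real assume t: "0 < t" "t \<le> 1"
  have "norm (g (x + t *\<^sub>R c *\<^sub>R h) - g x - t *\<^sub>R c *\<^sub>R D x h)
      = norm (g (x + (t * c) *\<^sub>R h) - g x - (t * c) *\<^sub>R D x h)" by simp
  also have "\<dots> \<le> L/2 * (t*c)\<^sup>2 * (norm h)\<^sup>2" using t c by (intro E) simp
  also have "\<dots> = L/2 * c\<^sup>2 * (norm h)\<^sup>2 * t\<^sup>2" by (simp add: power_mult_distrib)
  finally show "norm (g (x + t *\<^sub>R c *\<^sub>R h) - g x - t *\<^sub>R c *\<^sub>R D x h) \<le> L/2 * c\<^sup>2 * (norm h)\<^sup>2 * t\<^sup>2" .
qed

lemma D_zero: "D x 0 = 0"
  by (rule sym, rule U[where K = 0]) simp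

lemma mid:
  "norm (g ((1/2) *\<^sub>R a + (1/2) *\<^sub>R b) - ((1/2) *\<^sub>R g a + (1/2) *\<^sub>R g b)) \<le> L/8 * (norm (a-b))\<^sup>2"
  using two[of "1/2" a b] by simp

lemma D_neg: "D x (- h) = - D x h"
proof (rule sym, rule U[where K = "3/2 * L * (norm h)\<^sup>2"])
  fix t :: real assume t: "0 < t" "t \<le> 1"
  have m: "norm (g x - ((1/2) *\<^sub>R g (x + t *\<^sub>R h) + (1/2) *\<^sub>R g (x - t *\<^sub>R h))) \<le> L/8 * (norm ((2 * t) *\<^sub>R h))\<^sup>2"
  proof -
    have "(x + t *\<^sub>R h) + (x - t *\<^sub>R h) = 2 *\<^sub>R x" by (simp add: scaleR_2)
    then have pt: "(1/2) *\<^sub>R (x + t *\<^sub>R h) + (1/2) *\<^sub>R (x - t *\<^sub>R h) = x"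
      by (rule half_sum)
    have "(x + t *\<^sub>R h) - (x - t *\<^sub>R h) = (2 * t) *\<^sub>R h" by (simp add: algebra_simps dbl)
    then show ?thesis using mid[of "x + t *\<^sub>R h" "x - t *\<^sub>R h"] by (simp only: pt)
  qed
  have m2: "L/8 * (norm ((2 * t) *\<^sub>R h))\<^sup>2 = L/2 * t\<^sup>2 * (norm h)\<^sup>2"
    using t by (simp add: power_mult_distrib)
  have eq: "g (x + t *\<^sub>R - h) - g x - t *\<^sub>R - D x h
     = (-2) *\<^sub>R (g x - ((1/2) *\<^sub>R g (x + t *\<^sub>R h) + (1/2) *\<^sub>R g (x - t *\<^sub>R h)))
       - (g (x + t *\<^sub>R h) - g x - t *\<^sub>R D x h)"
    by (simp add: algebra_simps scaleR_2)
  have "norm (g (x + t *\<^sub>R - h) - g x - t *\<^sub>R - D x h)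
     \<le> 2 * norm (g x - ((1/2) *\<^sub>R g (x + t *\<^sub>R h) + (1/2) *\<^sub>R g (x - t *\<^sub>R h)))
       + norm (g (x + t *\<^sub>R h) - g x - t *\<^sub>R D x h)"
    unfolding eq using norm_triangle_ineq4 by (metis norm_scaleR abs_neg_numeral abs_numeral)
  also have "\<dots> \<le> 2 * (L/2 * t\<^sup>2 * (norm h)\<^sup>2) + L/2 * t\<^sup>2 * (norm h)\<^sup>2"
    using m m2 E[of t x h] t by linarith
  also have "\<dots> = 3/2 * L * (norm h)\<^sup>2 * t\<^sup>2" by simp
  finally show "norm (g (x + t *\<^sub>R - h) - g x - t *\<^sub>R - D x h) \<le> 3/2 * L * (norm h)\<^sup>2 * t\<^sup>2" .
qed

lemma D_add: "D x (h + k) = D x h + D x k"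
proof (rule sym, rule U[where K = "L/2 * (norm (h-k))\<^sup>2 + L * (norm h)\<^sup>2 + L * (norm k)\<^sup>2"])
  fix t :: real assume t: "0 < t" "t \<le> 1"
  have m: "norm (g (x + t *\<^sub>R (h + k)) - ((1/2) *\<^sub>R g (x + (2*t) *\<^sub>R h) + (1/2) *\<^sub>R g (x + (2*t) *\<^sub>R k)))
      \<le> L/8 * (norm ((2*t) *\<^sub>R (h - k)))\<^sup>2"
  proof -
    have "(x + (2*t) *\<^sub>R h) + (x + (2*t) *\<^sub>R k) = 2 *\<^sub>R (x + t *\<^sub>R (h + k))" by (simp add: algebra_simps scaleR_2)
    then have pt: "(1/2) *\<^sub>R (x + (2*t) *\<^sub>R h) + (1/2) *\<^sub>R (x + (2*t) *\<^sub>R k) = x + t *\<^sub>R (h + k)"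
      by (rule half_sum)
    have "(x + (2*t) *\<^sub>R h) - (x + (2*t) *\<^sub>R k) = (2*t) *\<^sub>R (h - k)" by (simp add: algebra_simps)
    then show ?thesis using mid[of "x + (2*t) *\<^sub>R h" "x + (2*t) *\<^sub>R k"] by (simp only: pt)
  qed
  have m2: "L/8 * (norm ((2*t) *\<^sub>R (h - k)))\<^sup>2 = L/2 * (norm (h-k))\<^sup>2 * t\<^sup>2"
    using t by (simp add: power_mult_distrib)
  have e1: "norm (g (x + (2*t) *\<^sub>R h) - g x - (2*t) *\<^sub>R D x h) \<le> L/2 * (2*t)\<^sup>2 * (norm h)\<^sup>2"
    using t by (intro E) simp
  have e2: "norm (g (x + (2*t) *\<^sub>R k) - g x - (2*t) *\<^sub>R D x k) \<le> L/2 * (2*t)\<^sup>2 * (norm k)\<^sup>2"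
    using t by (intro E) simp
  have eq: "g (x + t *\<^sub>R (h + k)) - g x - t *\<^sub>R (D x h + D x k)
     = (g (x + t *\<^sub>R (h + k)) - ((1/2) *\<^sub>R g (x + (2*t) *\<^sub>R h) + (1/2) *\<^sub>R g (x + (2*t) *\<^sub>R k)))
       + (1/2) *\<^sub>R (g (x + (2*t) *\<^sub>R h) - g x - (2*t) *\<^sub>R D x h)
       + (1/2) *\<^sub>R (g (x + (2*t) *\<^sub>R k) - g x - (2*t) *\<^sub>R D x k)"
    by (simp add: algebra_simps hh)
  have "norm (g (x + t *\<^sub>R (h + k)) - g x - t *\<^sub>R (D x h + D x k))
     \<le> norm (g (x + t *\<^sub>R (h + k)) - ((1/2) *\<^sub>R g (x + (2*t) *\<^sub>R h) + (1/2) *\<^sub>R g (x + (2*t) *\<^sub>R k)))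
       + 1/2 * norm (g (x + (2*t) *\<^sub>R h) - g x - (2*t) *\<^sub>R D x h)
       + 1/2 * norm (g (x + (2*t) *\<^sub>R k) - g x - (2*t) *\<^sub>R D x k)"
    unfolding eq by (rule order_trans[OF tri3]) simp
  also have "\<dots> \<le> L/2 * (norm (h-k))\<^sup>2 * t\<^sup>2 + 1/2 * (L/2 * (2*t)\<^sup>2 * (norm h)\<^sup>2) + 1/2 * (L/2 * (2*t)\<^sup>2 * (norm k)\<^sup>2)"
    using m m2 e1 e2 by linarith
  also have "\<dots> = (L/2 * (norm (h-k))\<^sup>2 + L * (norm h)\<^sup>2 + L * (norm k)\<^sup>2) * t\<^sup>2"
    by (simp add: power2_eq_square algebra_simps)
  finally show "norm (g (x + t *\<^sub>R (h + k)) - g x - t *\<^sub>R (D x h + D x k)) \<le> (L/2 * (norm (h-k))\<^sup>2 + L * (norm h)\<^sup>2 + L * (norm k)\<^sup>2) * t\<^sup>2" .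
qed

lemma D_scale: "D x (c *\<^sub>R h) = c *\<^sub>R D x h"
proof -
  consider "c > 0" | "c = 0" | "c < 0" by linarith
  then show ?thesis
  proof cases
    case 1 then show ?thesis by (rule D_scale_pos)
  next
    case 2 then show ?thesis by (simp add: D_zero)
  next
    case 3
    have "D x (c *\<^sub>R h) = D x (- ((-c) *\<^sub>R h))" by simp
    also have "\<dots> = - D x ((-c) *\<^sub>R h)" by (rule D_neg)
    also have "D x ((-c) *\<^sub>R h) = (-c) *\<^sub>R D x h" using 3 by (intro D_scale_pos) simp
    finally show ?thesis by simp
  qed
qed

lemma D_linear: "linear (D x)"
  by (rule linearI) (simp_all add: D_add D_scale)

lemma E1': "norm (g z - g p - D p (z - p)) \<le> L/2 * (norm (z - p))\<^sup>2"
  using E1[of p "z - p"] by simp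

lemma lip_aux: "2 * norm (D x v - D y v) \<le> L/2 * (4 * (norm v)\<^sup>2 + (norm (x - y))\<^sup>2)"
proof -
  define u where "u = (1/2) *\<^sub>R (x - y)"
  have xu: "x = y + u + u" unfolding u_def by (simp only: add.assoc hh) simp
  have nu: "norm (x - y) = 2 * norm u" by (simp add: xu flip: scaleR_2)
  define z where "z = y + u + v"
  define w where "w = y + u - v"
  have zx: "z - x = v - u" by (simp add: z_def xu algebra_simps)
  have zy: "z - y = v + u" by (simp add: z_def algebra_simps)
  have wx: "w - x = - v - u" by (simp add: w_def xu algebra_simps)
  have wy: "w - y = - v + u" by (simp add: w_def algebra_simps)
  have lx: "D x (z - x) - D x (w - x) = 2 *\<^sub>R D x v"
  proof -
    have "D x (z - x) - D x (w - x) = D x ((z - x) - (w - x))" by (simp add: linear_diff[OF D_linear])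
    also have "(z - x) - (w - x) = 2 *\<^sub>R v" by (simp add: z_def w_def algebra_simps scaleR_2)
    finally show ?thesis by (simp add: D_scale)
  qed
  have ly: "D y (z - y) - D y (w - y) = 2 *\<^sub>R D y v"
  proof -
    have "D y (z - y) - D y (w - y) = D y ((z - y) - (w - y))" by (simp add: linear_diff[OF D_linear])
    also have "(z - y) - (w - y) = 2 *\<^sub>R v" by (simp add: z_def w_def algebra_simps scaleR_2)
    finally show ?thesis by (simp add: D_scale)
  qed
  have eq: "2 *\<^sub>R (D x v - D y v) = - (g z - g x - D x (z - x)) + (g z - g y - D y (z - y))
      + (g w - g x - D x (w - x)) - (g w - g y - D y (w - y))"
  proof -
    have "2 *\<^sub>R (D x v - D y v) = (D x (z - x) - D x (w - x)) - (D y (z - y) - D y (w - y))"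
      by (simp add: lx ly algebra_simps)
    then show ?thesis by (simp add: algebra_simps)
  qed
  have "2 * norm (D x v - D y v) = norm (2 *\<^sub>R (D x v - D y v))" by simp
  also have "\<dots> \<le> norm (g z - g x - D x (z - x)) + norm (g z - g y - D y (z - y))
      + norm (g w - g x - D x (w - x)) + norm (g w - g y - D y (w - y))"
    unfolding eq by (rule tri4)
  also have "\<dots> \<le> L/2 * (norm (z - x))\<^sup>2 + L/2 * (norm (z - y))\<^sup>2 + L/2 * (norm (w - x))\<^sup>2 + L/2 * (norm (w - y))\<^sup>2"
    using E1'[of z x] E1'[of z y] E1'[of w x] E1'[of w y] by linarith
  also have "\<dots> = L/2 * (((norm (v + u))\<^sup>2 + (norm (v - u))\<^sup>2)
      + ((norm (- v + u))\<^sup>2 + (norm (- v - u))\<^sup>2))"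
    by (simp add: zx zy wx wy algebra_simps)
  also have "\<dots> = L/2 * (2 * ((norm v)\<^sup>2 + (norm u)\<^sup>2) + 2 * ((norm (-v))\<^sup>2 + (norm u)\<^sup>2))"
    by (simp only: parallelogram)
  also have "\<dots> = L/2 * (4 * (norm v)\<^sup>2 + (norm (x - y))\<^sup>2)"
    by (simp add: nu power_mult_distrib power2_eq_square algebra_simps)
  finally show ?thesis .
qed

lemma D_lip: "norm (D x h - D y h) \<le> L * norm (x - y) * norm h"
proof (cases "h = 0 \<or> x = y")
  case True
  then show ?thesis by (auto simp: D_zero)
next
  case False
  then have hp: "norm h > 0" and dp: "norm (x - y) > 0" by auto
  define c where "c = norm (x - y) / (2 * norm h)"
  have c: "c > 0" using hp dp by (simp add: c_def)
  have nv: "norm (c *\<^sub>R h) = norm (x - y) / 2" using hp c by (simp add: c_def)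
  have "2 * (c * norm (D x h - D y h)) = 2 * norm (D x (c *\<^sub>R h) - D y (c *\<^sub>R h))"
    using c by (simp add: D_scale flip: scaleR_right_diff_distrib)
  also have "\<dots> \<le> L/2 * (4 * (norm (c *\<^sub>R h))\<^sup>2 + (norm (x - y))\<^sup>2)" by (rule lip_aux)
  also have "\<dots> = L * (norm (x - y))\<^sup>2" unfolding nv by (simp add: power2_eq_square)
  finally have "norm (x - y) / norm h * norm (D x h - D y h) \<le> L * (norm (x - y))\<^sup>2"
    by (simp add: c_def)
  then have "norm (x - y) * norm (D x h - D y h) \<le> norm (x - y) * (L * norm (x - y) * norm h)"
    using hp by (simp add: field_simps power2_eq_square)
  then show ?thesis using dp by simp
qed

end
locale semif = semi +
  fixes f :: "'a \<Rightarrow> real"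
  assumes grad: "\<And>x. (f has_derivative (\<lambda>h. g x \<bullet> h)) (at x)"
begin

lemma fline: "((\<lambda>t. f (p + t *\<^sub>R k)) has_real_derivative (g (p + t *\<^sub>R k) \<bullet> k)) (at t)"
proof (rule has_derivative_imp_has_field_derivative)
  have d1: "((\<lambda>t. p + t *\<^sub>R k) has_derivative (\<lambda>s. s *\<^sub>R k)) (at t)"
    by (auto intro!: derivative_eq_intros)
  show "((\<lambda>t. f (p + t *\<^sub>R k)) has_derivative (\<lambda>s. g (p + t *\<^sub>R k) \<bullet> (s *\<^sub>R k))) (at t)"
    by (rule has_derivative_compose[OF d1 grad])
  show "\<And>s. s * (g (p + t *\<^sub>R k) \<bullet> k) = g (p + t *\<^sub>R k) \<bullet> (s *\<^sub>R k)" by simp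
qed

lemma line_exp:
  "\<bar>f (p + k) - f p - g p \<bullet> k - (D p k \<bullet> k) / 2\<bar> \<le> L/2 * norm k ^ 3"
proof -
  define c where "c = D p k \<bullet> k"
  define \<psi> where "\<psi> t = f (p + t *\<^sub>R k) - t * (g p \<bullet> k) - t * t / 2 * c" for t
  have der: "(\<psi> has_real_derivative (g (p + t *\<^sub>R k) \<bullet> k - g p \<bullet> k - t * c)) (at t)" for t
    unfolding \<psi>_def
    by (auto intro!: derivative_eq_intros fline simp: algebra_simps)
  obtain z where z: "0 < z" "z < 1" "\<psi> 1 - \<psi> 0 = (1 - 0) * (g (p + z *\<^sub>R k) \<bullet> k - g p \<bullet> k - z * c)"
    using MVT2[of 0 1 \<psi> "\<lambda>t. g (p + t *\<^sub>R k) \<bullet> k - g p \<bullet> k - t * c"] der by auto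
  have ip: "g (p + z *\<^sub>R k) \<bullet> k - g p \<bullet> k - z * c = (g (p + z *\<^sub>R k) - g p - z *\<^sub>R D p k) \<bullet> k"
    by (simp add: c_def inner_diff_left)
  have "\<bar>(g (p + z *\<^sub>R k) - g p - z *\<^sub>R D p k) \<bullet> k\<bar> \<le> norm (g (p + z *\<^sub>R k) - g p - z *\<^sub>R D p k) * norm k"
    by (rule Cauchy_Schwarz_ineq2)
  also have "\<dots> \<le> (L/2 * z\<^sup>2 * (norm k)\<^sup>2) * norm k"
    using E[of z p k] z by (intro mult_right_mono) auto
  also have "\<dots> \<le> (L/2 * 1 * (norm k)\<^sup>2) * norm k"
    using z Lpos by (intro mult_right_mono mult_left_mono) (auto simp: power_le_one)
  also have "\<dots> = L/2 * norm k ^ 3" by (simp add: power2_eq_square power3_eq_cube)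
  finally have b: "\<bar>\<psi> 1 - \<psi> 0\<bar> \<le> L/2 * norm k ^ 3" using z(3) ip by simp
  have "\<psi> 1 - \<psi> 0 = f (p + k) - f p - g p \<bullet> k - (D p k \<bullet> k) / 2"
    by (simp add: \<psi>_def c_def)
  then show ?thesis using b by simp
qed

definition r :: "'a \<Rightarrow> 'a \<Rightarrow> real" where
  "r p k = f (p + k) - f p - g p \<bullet> k"

lemma r_split: "(g h - g 0) \<bullet> k = r 0 (h + k) - r 0 h - r h k"
  by (simp add: r_def inner_diff_left inner_add_right algebra_simps)

lemma r_exp: "\<bar>r p k - (D p k \<bullet> k) / 2\<bar> \<le> L/2 * norm k ^ 3"
  using line_exp[of p k] by (simp add: r_def)

lemma g_loc_bounded:
  obtains \<eta> M where "\<eta> > 0" "\<And>h. norm h \<le> \<eta> \<Longrightarrow> norm (g h - g 0) \<le> M"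
proof -
  obtain \<delta> where \<delta>: "\<delta> > 0" and rd: "\<And>y. norm y < \<delta> \<Longrightarrow> \<bar>r 0 y\<bar> \<le> norm y"
  proof -
    from grad[of 0] have "\<forall>e>0. \<exists>d>0. \<forall>y. norm (y - 0) < d \<longrightarrow> norm (f y - f 0 - g 0 \<bullet> (y - 0)) \<le> e * norm (y - 0)"
      unfolding has_derivative_at_alt by blast
    then obtain d where "d > 0" "\<forall>y. norm y < d \<longrightarrow> \<bar>f y - f 0 - g 0 \<bullet> y\<bar> \<le> norm y"
      by (metis diff_zero mult_1 real_norm_def zero_less_one)
    then show ?thesis using that by (simp add: r_def)
  qed
  define \<eta> where "\<eta> = \<delta> / 3"
  have \<eta>: "\<eta> > 0" using \<delta> by (simp add: \<eta>_def)
  define M where "M = 4 + 3/2 * L * \<eta>\<^sup>2"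
  have key: "\<bar>(g h - g 0) \<bullet> k\<bar> \<le> \<eta> * M" if h: "norm h \<le> \<eta>" and k: "norm k = \<eta>" for h k
  proof -
    have hk: "norm (h + k) < \<delta>"
      using norm_triangle_ineq[of h k] h k \<eta> by (simp add: \<eta>_def)
    have r1: "\<bar>r 0 (h + k)\<bar> \<le> 2 * \<eta>"
      using rd[OF hk] norm_triangle_ineq[of h k] h k by linarith
    have r2: "\<bar>r 0 h\<bar> \<le> \<eta>" using rd[of h] h \<eta> by (simp add: \<eta>_def)
    have r3: "\<bar>r 0 k\<bar> \<le> \<eta>" using rd[of k] k \<eta> by (simp add: \<eta>_def)
    have e1: "\<bar>r h k - (D h k \<bullet> k) / 2\<bar> \<le> L/2 * \<eta> ^ 3" using r_exp[of h k] k by simp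
    have e2: "\<bar>r 0 k - (D 0 k \<bullet> k) / 2\<bar> \<le> L/2 * \<eta> ^ 3" using r_exp[of 0 k] k by simp
    have "\<bar>(D h k - D 0 k) \<bullet> k\<bar> \<le> norm (D h k - D 0 k) * norm k" by (rule Cauchy_Schwarz_ineq2)
    also have "\<dots> \<le> (L * norm (h - 0) * norm k) * norm k" using D_lip[where x=h and y=0 and h=k] by (intro mult_right_mono) auto
    also have "\<dots> \<le> (L * \<eta> * \<eta>) * \<eta>" using h k Lpos \<eta> by (intro mult_mono) auto
    finally have e3: "\<bar>D h k \<bullet> k - D 0 k \<bullet> k\<bar> \<le> L * \<eta> ^ 3" by (simp add: inner_diff_left power3_eq_cube)
    have "\<bar>(g h - g 0) \<bullet> k\<bar> \<le> 2 * \<eta> + \<eta> + \<eta> + L/2 * \<eta> ^ 3 + L/2 * \<eta> ^ 3 + 1/2 * (L * \<eta> ^ 3)"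
      unfolding r_split using r1 r2 r3 e1 e2 e3 by linarith
    also have "\<dots> = \<eta> * M" by (simp add: M_def power2_eq_square power3_eq_cube algebra_simps)
    finally show ?thesis .
  qed
  show ?thesis
  proof (rule that[OF \<eta>])
    fix h :: 'a assume h: "norm h \<le> \<eta>"
    show "norm (g h - g 0) \<le> M"
    proof (cases "g h - g 0 = 0")
      case True then show ?thesis using Lpos by (simp add: M_def)
    next
      case False
      define k where "k = (\<eta> / norm (g h - g 0)) *\<^sub>R (g h - g 0)"
      have nk: "norm k = \<eta>" using False \<eta> by (simp add: k_def)
      have "(g h - g 0) \<bullet> k = \<eta> * norm (g h - g 0)"
        using False by (simp add: k_def power2_norm_eq_inner[symmetric] power2_eq_square)
      then have "\<eta> * norm (g h - g 0) \<le> \<eta> * M" using key[OF h nk] by simp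
      then show ?thesis using \<eta> by simp
    qed
  qed
qed

lemma D0_bounded: "\<exists>K. \<forall>h. norm (D 0 h) \<le> K * norm h"
proof -
  obtain \<eta> M where \<eta>: "\<eta> > 0" and gb: "\<And>h. norm h \<le> \<eta> \<Longrightarrow> norm (g h - g 0) \<le> M"
    using g_loc_bounded by blast
  define K where "K = (M + L/2 * \<eta>\<^sup>2) / \<eta>"
  have "norm (D 0 h) \<le> K * norm h" for h
  proof (cases "h = 0")
    case True then show ?thesis by (simp add: D_zero)
  next
    case False
    define w where "w = (\<eta> / norm h) *\<^sub>R h"
    have nw: "norm w = \<eta>" using False \<eta> by (simp add: w_def)
    have "norm (D 0 w) \<le> norm (g w - g 0) + norm (g (0 + w) - g 0 - D 0 w)"
      using norm_triangle_ineq4[of "g w - g 0" "g (0 + w) - g 0 - D 0 w"] by simp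
    also have "\<dots> \<le> M + L/2 * \<eta>\<^sup>2" using gb[of w] nw E1[of 0 w] by simp
    finally have "(\<eta> / norm h) * norm (D 0 h) \<le> M + L/2 * \<eta>\<^sup>2"
      using \<eta> by (simp add: w_def D_scale)
    then show ?thesis using False \<eta> by (simp add: K_def field_simps)
  qed
  then show ?thesis by blast
qed

lemma D_bounded_linear: "bounded_linear (D x)"
proof -
  obtain K where K: "\<And>h. norm (D 0 h) \<le> K * norm h" using D0_bounded by blast
  show ?thesis
  proof (rule bounded_linear_intro[where K = "K + L * norm x"])
    show "D x (a + b) = D x a + D x b" for a b by (rule D_add)
    show "D x (c *\<^sub>R a) = c *\<^sub>R D x a" for c a by (rule D_scale)
    fix h
    have "norm (D x h) \<le> norm (D 0 h) + norm (D x h - D 0 h)"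
      using norm_triangle_ineq4[of "D x h - D 0 h" "- D 0 h"] by (metis add_diff_cancel_left' diff_add_cancel norm_triangle_ineq add.commute)
    also have "\<dots> \<le> K * norm h + L * norm (x - 0) * norm h" using K[of h] D_lip[where x=x and y=0 and h=h] by linarith
    finally show "norm (D x h) \<le> norm h * (K + L * norm x)" by (simp add: algebra_simps)
  qed
qed

lemma g_deriv: "(g has_derivative D x) (at x)"
  unfolding has_derivative_iff_norm
proof (intro conjI D_bounded_linear)
  have lim: "((\<lambda>y. L/2 * norm (y - x)) \<longlongrightarrow> 0) (at x)"
  proof -
    have "((\<lambda>y. L/2 * norm (y - x)) \<longlongrightarrow> L/2 * norm (x - x)) (at x)"
      by (intro tendsto_intros)
    then show ?thesis by simp
  qed
  show "((\<lambda>y. norm (g y - g x - D x (y - x)) / norm (y - x)) \<longlongrightarrow> 0) (at x)"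
  proof (rule Lim_null_comparison[OF _ lim], rule always_eventually, rule allI)
    fix y
    have b: "norm (g y - g x - D x (y - x)) \<le> L/2 * (norm (y - x))\<^sup>2"
      using E1[of x "y - x"] by simp
    show "norm (norm (g y - g x - D x (y - x)) / norm (y - x)) \<le> L/2 * norm (y - x)"
    proof (cases "y = x")
      case True then show ?thesis by simp
    next
      case False
      then have "norm (y - x) > 0" by simp
      then show ?thesis using b by (simp add: field_simps power2_eq_square)
    qed
  qed
qed

end

theorem corollary1p3:
  fixes f :: "'a::{real_inner, complete_space} \<Rightarrow> real"
    and gradf :: "'a \<Rightarrow> 'a"
    and L :: real
  assumes L_pos: "L > 0"
    and grad: "\<And>x. (f has_derivative (\<lambda>h. gradf x \<bullet> h)) (at x)"
    and cond: "\<And>(n::nat) (x :: nat \<Rightarrow> 'a) (lam :: nat \<Rightarrow> real).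
                 n \<ge> 1 \<Longrightarrow> (\<forall>i<n. lam i \<ge> 0) \<Longrightarrow> (\<Sum>i<n. lam i) = 1 \<Longrightarrow>
                 norm (gradf (\<Sum>i<n. lam i *\<^sub>R x i) - (\<Sum>i<n. lam i *\<^sub>R gradf (x i)))
                   \<le> L / 2 * (\<Sum>i<n. \<Sum>j\<in>{i<..<n}. lam i * lam j * (norm (x i - x j))\<^sup>2)"
  shows "\<exists>H :: 'a \<Rightarrow> ('a \<Rightarrow>\<^sub>L 'a).
           (\<forall>x. (gradf has_derivative blinfun_apply (H x)) (at x)) \<and>
           (\<forall>x y. norm (H x - H y) \<le> L * norm (x - y))"
proof -
  have two: "norm (gradf (l *\<^sub>R a + (1 - l) *\<^sub>R b) - (l *\<^sub>R gradf a + (1 - l) *\<^sub>R gradf b))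
       \<le> L/2 * (l * (1-l) * (norm (a-b))\<^sup>2)" if l: "0 \<le> l" "l \<le> 1" for a b :: 'a and l :: real
  proof -
    define xs where "xs = (\<lambda>i::nat. if i = 0 then a else b)"
    define lam where "lam = (\<lambda>i::nat. if i = 0 then l else 1 - l)"
    have s1: "{..<2::nat} = {0, 1}" by auto
    have s2: "{0<..<2::nat} = {1}" by auto
    have s3: "{Suc 0<..<2::nat} = {}" by auto
    have "(\<forall>i<2. lam i \<ge> 0)" using l by (auto simp: lam_def)
    moreover have "(\<Sum>i<2. lam i) = 1" by (simp add: s1 lam_def)
    ultimately have "norm (gradf (\<Sum>i<2. lam i *\<^sub>R xs i) - (\<Sum>i<2. lam i *\<^sub>R gradf (xs i)))
                   \<le> L / 2 * (\<Sum>i<2. \<Sum>j\<in>{i<..<2}. lam i * lam j * (norm (xs i - xs j))\<^sup>2)"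
      using cond[of 2 lam xs] by simp
    then show ?thesis by (simp add: s1 s2 s3 xs_def lam_def)
  qed
  interpret semif gradf L f
    by unfold_locales (use L_pos two grad in auto)
  define H where "H x = Blinfun (D x)" for x
  have HD: "blinfun_apply (H x) = D x" for x
    using D_bounded_linear by (simp add: H_def bounded_linear_Blinfun_apply)
  show ?thesis
  proof (intro exI conjI allI)
    show "(gradf has_derivative blinfun_apply (H x)) (at x)" for x using g_deriv by (simp add: HD)
    show "norm (H x - H y) \<le> L * norm (x - y)" for x y
    proof (rule norm_blinfun_bound)
      show "0 \<le> L * norm (x - y)" using L_pos by simp
      show "norm (blinfun_apply (H x - H y) v) \<le> L * norm (x - y) * norm v" for v
        using D_lip[where x=x and y=y and h=v] by (simp add: blinfun.diff_left HD)
    qed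
  qed
qed

end
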